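(* Let $p,m,n\ge1$, let $a_1,\dots,a_n\in\mathbb{C}$ be distinct, let $m_1,\dots,m_n\ge1$ be integers, and let $C_0,\dots,C_{m-1}$, $B_k^{(j)}$ be complex $p\times p$ matrices. Let $$R(\lambda)=I\lambda^m-C_{m-1}\lambda^{m-1}-\cdots-C_1\lambda-C_0+\sum_{j=1}^{n}\sum_{k=1}^{m_j}\frac{B_k^{(j)}}{(\lambda-a_j)^k},$$ let $\|\cdot\|$ be any induced matrix norm, and define the real rational function $$q(x)=x^m-\|C_{m-1}\|x^{m-1}-\cdots-\|C_1\|x-\|C_0\|-\sum_{j=1}^n\sum_{k=1}^{m_j}\frac{\|B_k^{(j)}\|}{(x-|a_j|)^k}.$$ If $\lambda_0$ is an eigenvalue of $R(\lambda)$ and $R$ is a real zero of $q$ with $|a_j|<R$ for all $j=1,\dots,n$, then $|\lambda_0|\le R$.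
   Context: A scalar $\lambda_0\in\mathbb{C}\setminus\{a_1,\dots,a_n\}$ is an eigenvalue of $R(\lambda)$ if there is a nonzero $v\in\mathbb{C}^p$ with $R(\lambda_0)v=0$. *)

theory Defs
  imports "HOL-Analysis.Analysis"
begin

definition is_vec_norm :: "(complex^'p \<Rightarrow> real) \<Rightarrow> bool" where
  "is_vec_norm N \<longleftrightarrow>
     (\<forall>x. 0 \<le> N x) \<and> (\<forall>x. N x = 0 \<longleftrightarrow> x = 0) \<and>
     (\<forall>c x. N (c *s x) = cmod c * N x) \<and> (\<forall>x y. N (x + y) \<le> N x + N y)"

definition induced_norm :: "(complex^'p \<Rightarrow> real) \<Rightarrow> complex^'p^'p \<Rightarrow> real" where
  "induced_norm N A = Sup {N (A *v v) | v. N v = 1}"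

definition mscale :: "complex \<Rightarrow> complex^'p^'p \<Rightarrow> complex^'p^'p" where
  "mscale c A = (\<chi> i j. c * A $ i $ j)"

definition Rmat :: "nat \<Rightarrow> (nat \<Rightarrow> complex^'p^'p) \<Rightarrow> nat \<Rightarrow> (nat \<Rightarrow> complex)
    \<Rightarrow> (nat \<Rightarrow> nat) \<Rightarrow> (nat \<Rightarrow> nat \<Rightarrow> complex^'p^'p) \<Rightarrow> complex \<Rightarrow> complex^'p^'p" where
  "Rmat m C n a mm B z =
     mscale (z ^ m) (mat 1) - (\<Sum>i<m. mscale (z ^ i) (C i))
     + (\<Sum>j=1..n. \<Sum>k=1..mm j. mscale (1 / (z - a j) ^ k) (B j k))"

definition is_eigenvalue_R :: "nat \<Rightarrow> (nat \<Rightarrow> complex^'p^'p) \<Rightarrow> nat \<Rightarrow> (nat \<Rightarrow> complex)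
    \<Rightarrow> (nat \<Rightarrow> nat) \<Rightarrow> (nat \<Rightarrow> nat \<Rightarrow> complex^'p^'p) \<Rightarrow> complex \<Rightarrow> bool" where
  "is_eigenvalue_R m C n a mm B z0 \<longleftrightarrow>
     z0 \<notin> a ` {1..n} \<and> (\<exists>v. v \<noteq> 0 \<and> Rmat m C n a mm B z0 *v v = 0)"

definition qfun :: "(complex^'p^'p \<Rightarrow> real) \<Rightarrow> nat \<Rightarrow> (nat \<Rightarrow> complex^'p^'p) \<Rightarrow> nat
    \<Rightarrow> (nat \<Rightarrow> complex) \<Rightarrow> (nat \<Rightarrow> nat) \<Rightarrow> (nat \<Rightarrow> nat \<Rightarrow> complex^'p^'p) \<Rightarrow> real \<Rightarrow> real" where
  "qfun nrm m C n a mm B x =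
     x ^ m - (\<Sum>i<m. nrm (C i) * x ^ i)
     - (\<Sum>j=1..n. \<Sum>k=1..mm j. nrm (B j k) / (x - cmod (a j)) ^ k)"

end

theory Submission
  imports Defs
begin

lemma norm_axis_c: "norm (axis i (1::complex)) = (1::real)"
proof -
  have "(\<lambda>j. norm (axis i (1::complex) $ j)) = (\<lambda>j. if j = i then 1 else 0)"
    by (auto simp: axis_def)
  then show ?thesis by (simp add: norm_vec_def L2_set_def if_distrib[of "\<lambda>t. t^2"] cong: if_cong)
qed

lemma cscale_real: "complex_of_real r *s (x::complex^'a) = r *\<^sub>R x"
proof (rule vec_eq_iff[THEN iffD2, rule_format])
  fix i show "(complex_of_real r *s x) $ i = (r *\<^sub>R x) $ i"
    by (simp only: vector_smult_component vector_scaleR_component) (simp add: scaleR_conv_of_real)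
qed

lemma vn_basic:
  assumes "is_vec_norm N"
  shows "N 0 = 0" "N (- x) = N x" "N (c *s x) = cmod c * N x" "N (x + y) \<le> N x + N y"
    "0 \<le> N x" "N (x - y) \<le> N x + N y" "N x = 0 \<longleftrightarrow> x = 0"
proof -
  have sc: "\<And>c x. N (c *s x) = cmod c * N x" and tr: "\<And>x y. N (x + y) \<le> N x + N y"
    and nn: "\<And>x. 0 \<le> N x" and z: "\<And>x. N x = 0 \<longleftrightarrow> x = 0"
    using assms unfolding is_vec_norm_def by auto
  show "N 0 = 0" using z by simp
  show "N (c *s x) = cmod c * N x" by (rule sc)
  show "N (x + y) \<le> N x + N y" by (rule tr)
  show "0 \<le> N x" by (rule nn)
  show "N x = 0 \<longleftrightarrow> x = 0" by (rule z)
  have m: "(-1::complex) *s w = - w" for w :: "complex^'a" by (simp add: vec_eq_iff)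
  have neg: "N (- w) = N w" for w using sc[of "-1" w] m[of w] by simp
  show "N (- x) = N x" by (rule neg)
  show "N (x - y) \<le> N x + N y" using tr[of x "- y"] neg[of y] by simp
qed

lemma vn_sum:
  assumes "is_vec_norm N" and "finite A"
  shows "N (\<Sum>i\<in>A. f i) \<le> (\<Sum>i\<in>A. N (f i))"
  using assms(2)
proof (induction A rule: finite_induct)
  case empty then show ?case using vn_basic(1)[OF assms(1)] by (simp del: vn_basic)
next
  case (insert x F)
  then show ?case using vn_basic(4)[OF assms(1), of "f x" "sum f F"] by simp
qed

lemma vn_upper:
  assumes "is_vec_norm N"
  shows "\<exists>K. \<forall>x. N x \<le> K * norm x"
proof -
  let ?K = "\<Sum>i\<in>UNIV. N (axis i (1::complex) :: complex^'a)"
  have "N x \<le> ?K * norm x" for x :: "complex^'a"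
  proof -
    have "N x = N (\<Sum>i\<in>UNIV. x $ i *s axis i 1)" by (simp add: basis_expansion)
    also have "\<dots> \<le> (\<Sum>i\<in>UNIV. N (x $ i *s axis i 1))" by (rule vn_sum[OF assms]) simp
    also have "\<dots> = (\<Sum>i\<in>UNIV. cmod (x $ i) * N (axis i 1))"
      using vn_basic(3)[OF assms] by simp
    also have "\<dots> \<le> (\<Sum>i\<in>UNIV. norm x * N (axis i 1))"
      by (intro sum_mono mult_right_mono vn_basic(5)[OF assms]) (rule Finite_Cartesian_Product.norm_nth_le)
    also have "\<dots> = ?K * norm x" by (simp add: sum_distrib_left mult.commute)
    finally show ?thesis .
  qed
  then show ?thesis by blast
qed

lemma vn_lower:
  assumes "is_vec_norm N"
  shows "\<exists>c>0. \<forall>x. c * norm x \<le> N (x :: complex^'a)"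
proof -
  obtain K where K: "\<forall>x. N (x :: complex^'a) \<le> K * norm x" using vn_upper[OF assms] by blast
  obtain i :: 'a where True by simp
  have ax: "axis i (1::complex) \<in> sphere 0 1" using norm_axis_c[of i] by simp
  have Kpos: "0 \<le> K"
    using K[rule_format, of "axis i 1"] vn_basic(5)[OF assms, of "axis i 1"] norm_axis_c[of i] by simp
  have lip: "\<bar>N x - N y\<bar> \<le> K * norm (x - y)" for x y :: "complex^'a"
  proof -
    have "N x \<le> N y + N (x - y)" using vn_basic(4)[OF assms, of y "x - y"] by simp
    moreover have "N y \<le> N x + N (y - x)" using vn_basic(4)[OF assms, of x "y - x"] by simp
    moreover have "N (y - x) = N (x - y)" using vn_basic(2)[OF assms, of "x - y"] by simp
    ultimately show ?thesis using K[rule_format, of "x - y"] by linarith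
  qed
  have cont: "continuous_on (sphere 0 1) N"
    unfolding continuous_on_iff
  proof (intro ballI allI impI)
    fix x :: "complex^'a" and e :: real assume "0 < e"
    show "\<exists>d>0. \<forall>x'\<in>sphere 0 1. dist x' x < d \<longrightarrow> dist (N x') (N x) < e"
    proof (intro exI[of _ "e / (K + 1)"] conjI ballI impI)
      show "0 < e / (K + 1)" using \<open>0 < e\<close> Kpos by simp
      fix x' assume "dist x' x < e / (K + 1)"
      then have "norm (x' - x) * (K + 1) < e"
        using pos_less_divide_eq[of "K + 1" "norm (x' - x)" e] Kpos by (simp add: dist_norm)
      moreover have "dist (N x') (N x) \<le> K * norm (x' - x)" using lip[of x' x] by (simp add: dist_real_def)
      moreover have "K * norm (x' - x) \<le> norm (x' - x) * (K + 1)" by (simp add: algebra_simps)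
      ultimately show "dist (N x') (N x) < e" by linarith
    qed
  qed
  have ne: "sphere (0::complex^'a) 1 \<noteq> {}" using ax by blast
  obtain x0 where x0: "x0 \<in> sphere 0 1" "\<forall>y\<in>sphere 0 1. N x0 \<le> N y"
    using continuous_attains_inf[OF compact_sphere ne cont] by blast
  have "x0 \<noteq> 0" using x0(1) by auto
  then have cpos: "N x0 > 0" using vn_basic(5,7)[OF assms, of x0] by linarith
  have "N x0 * norm x \<le> N x" for x
  proof (cases "x = 0")
    case True then show ?thesis using vn_basic(1)[OF assms] by simp
  next
    case False
    let ?u = "complex_of_real (1 / norm x) *s x"
    have "norm ?u = 1" unfolding cscale_real using False by simp
    then have "N x0 \<le> N ?u" using x0(2) by simp
    also have "\<dots> = N x / norm x"
      using vn_basic(3)[OF assms, of "complex_of_real (1 / norm x)" x] by (simp add: norm_divide)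
    finally show ?thesis using False by (simp add: field_simps)
  qed
  then show ?thesis using cpos by blast
qed

lemma induced_bound:
  assumes "is_vec_norm N" and "N v = 1"
  shows "N (A *v v) \<le> induced_norm N A"
proof -
  obtain K where K: "\<forall>x. N (x :: complex^'a) \<le> K * norm x" using vn_upper[OF assms(1)] by blast
  obtain c where c: "c > 0" "\<forall>x. c * norm x \<le> N (x :: complex^'a)" using vn_lower[OF assms(1)] by blast
  obtain M where M: "\<forall>x. norm (A *v x) \<le> norm x * M" "M > 0"
    using bounded_linear.pos_bounded[OF matrix_vector_mul_bounded_linear[of A]] by blast
  have "N (A *v w) \<le> \<bar>K\<bar> * (M / c)" if "N w = 1" for w
  proof -
    have "c * norm w \<le> 1" using c(2) that by metis
    then have "norm w \<le> 1 / c" using c(1) by (simp add: field_simps)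
    then have "norm w * M \<le> (1 / c) * M" using M(2) by (intro mult_right_mono) simp_all
    then have "norm w * M \<le> M / c" by simp
    then have "norm (A *v w) \<le> M / c" using M(1) by (meson order_trans)
    moreover have "N (A *v w) \<le> \<bar>K\<bar> * norm (A *v w)"
      using K[rule_format, of "A *v w"] by (meson abs_ge_self mult_right_mono norm_ge_zero order_trans)
    ultimately show ?thesis by (meson abs_ge_zero mult_left_mono order_trans)
  qed
  then have "bdd_above {N (A *v v) | v. N v = 1}" unfolding bdd_above_def by blast
  moreover have "N (A *v v) \<in> {N (A *v v) | v. N v = 1}" using assms(2) by blast
  ultimately show ?thesis unfolding induced_norm_def by (simp add: cSup_upper)
qed

lemma induced_nonneg:
  assumes "is_vec_norm N"
  shows "0 \<le> induced_norm N (A :: complex^'a^'a)"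
proof -
  obtain i :: 'a where True by simp
  let ?e = "axis i (1::complex)"
  have "?e \<noteq> 0" using norm_axis_c[of i] by auto
  then have pos: "N ?e > 0" using vn_basic(5,7)[OF assms, of ?e] by linarith
  let ?w = "complex_of_real (1 / N ?e) *s ?e"
  have "N ?w = 1" using vn_basic(3)[OF assms, of "complex_of_real (1 / N ?e)" ?e] pos
    by (simp add: norm_divide)
  then show ?thesis using induced_bound[OF assms, of ?w A] vn_basic(5)[OF assms, of "A *v ?w"] by linarith
qed

lemma mv_mscale: "mscale c A *v v = c *s (A *v v)"
  by (simp add: vec_eq_iff matrix_vector_mult_def mscale_def sum_distrib_left mult.assoc)

lemma mv_sum: "finite S \<Longrightarrow> (\<Sum>i\<in>S. f i) *v v = (\<Sum>i\<in>S. f i *v v)"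
  by (induction S rule: finite_induct) (simp_all add: matrix_vector_mult_add_rdistrib)

theorem theorem3p8:
  fixes C :: "nat \<Rightarrow> complex^'p^'p" and B :: "nat \<Rightarrow> nat \<Rightarrow> complex^'p^'p"
    and a :: "nat \<Rightarrow> complex" and mm :: "nat \<Rightarrow> nat" and m n :: nat
    and N :: "complex^'p \<Rightarrow> real" and lam0 :: complex and R :: real
  assumes "m \<ge> 1" and "n \<ge> 1"
    and "inj_on a {1..n}"
    and "\<forall>j\<in>{1..n}. mm j \<ge> 1"
    and "is_vec_norm N"
    and "is_eigenvalue_R m C n a mm B lam0"
    and "qfun (induced_norm N) m C n a mm B R = 0"
    and "\<forall>j\<in>{1..n}. cmod (a j) < R"
  shows "cmod lam0 \<le> R"
proof (rule ccontr)
  assume "\<not> cmod lam0 \<le> R"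
  define x where "x = cmod lam0"
  have xR: "R < x" using \<open>\<not> cmod lam0 \<le> R\<close> x_def by simp
  have Rpos: "0 < R" using assms(2,8) by (metis atLeastAtMost_iff le_refl norm_ge_zero order_le_less_trans)
  have NN: "is_vec_norm N" by (rule assms(5))
  let ?nrm = "induced_norm N"
  obtain v0 where v0: "v0 \<noteq> 0" "Rmat m C n a mm B lam0 *v v0 = 0"
    using assms(6) unfolding is_eigenvalue_R_def by blast
  have Nv0: "N v0 > 0" using v0(1) vn_basic(5,7)[OF NN, of v0] by linarith
  define v where "v = complex_of_real (1 / N v0) *s v0"
  have Nv: "N v = 1" unfolding v_def using vn_basic(3)[OF NN, of "complex_of_real (1 / N v0)" v0] Nv0
    by (simp add: norm_divide)
  have Rv: "Rmat m C n a mm B lam0 *v v = 0" unfolding v_def by (simp add: vector_scalar_commute v0(2))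
  define P where "P = (\<Sum>i<m. lam0 ^ i *s (C i *v v))"
  define Q where "Q = (\<Sum>j=1..n. \<Sum>k=1..mm j. (1 / (lam0 - a j) ^ k) *s (B j k *v v))"
  have "Rmat m C n a mm B lam0 *v v = lam0 ^ m *s v - P + Q"
    unfolding Rmat_def P_def Q_def
    by (simp add: matrix_vector_mult_add_rdistrib matrix_vector_mult_diff_rdistrib mv_sum mv_mscale
        matrix_vector_mul_lid)
  then have eq: "lam0 ^ m *s v = P - Q" using Rv by (simp add: algebra_simps)
  have lhs: "N (lam0 ^ m *s v) = x ^ m" using vn_basic(3)[OF NN, of "lam0 ^ m" v] Nv
    by (simp add: x_def norm_power)
  define SC where "SC = (\<lambda>y::real. \<Sum>i<m. ?nrm (C i) * y ^ i)"
  define SB where "SB = (\<lambda>y::real. \<Sum>j=1..n. \<Sum>k=1..mm j. ?nrm (B j k) / (y - cmod (a j)) ^ k)"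
  have NP: "N P \<le> SC x"
  proof -
    have "N P \<le> (\<Sum>i<m. N (lam0 ^ i *s (C i *v v)))" unfolding P_def by (rule vn_sum[OF NN]) simp
    also have "\<dots> \<le> SC x" unfolding SC_def
    proof (rule sum_mono)
      fix i assume "i \<in> {..<m}"
      have "N (lam0 ^ i *s (C i *v v)) = x ^ i * N (C i *v v)"
        using vn_basic(3)[OF NN] by (simp add: x_def norm_power)
      also have "\<dots> \<le> x ^ i * ?nrm (C i)"
        by (rule mult_left_mono) (simp_all add: induced_bound[OF NN Nv] x_def)
      finally show "N (lam0 ^ i *s (C i *v v)) \<le> ?nrm (C i) * x ^ i" by (simp add: mult.commute)
    qed
    finally show ?thesis .
  qed
  have NQ: "N Q \<le> SB x"
  proof -
    have "N Q \<le> (\<Sum>j=1..n. N (\<Sum>k=1..mm j. (1 / (lam0 - a j) ^ k) *s (B j k *v v)))"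
      unfolding Q_def by (rule vn_sum[OF NN]) simp
    also have "\<dots> \<le> SB x" unfolding SB_def
    proof (rule sum_mono)
      fix j assume j: "j \<in> {1..n}"
      have aj: "cmod (a j) < x" using assms(8) j xR by fastforce
      have dist: "x - cmod (a j) \<le> cmod (lam0 - a j)" unfolding x_def by (rule norm_triangle_ineq2)
      have pp: "0 < cmod (lam0 - a j) ^ k * (x - cmod (a j)) ^ k" for k
        using aj dist by (intro mult_pos_pos zero_less_power) auto
      have "N (\<Sum>k=1..mm j. (1 / (lam0 - a j) ^ k) *s (B j k *v v))
          \<le> (\<Sum>k=1..mm j. N ((1 / (lam0 - a j) ^ k) *s (B j k *v v)))" by (rule vn_sum[OF NN]) simp
      also have "\<dots> \<le> (\<Sum>k=1..mm j. ?nrm (B j k) / (x - cmod (a j)) ^ k)"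
      proof (rule sum_mono)
        fix k assume "k \<in> {1..mm j}"
        have "N ((1 / (lam0 - a j) ^ k) *s (B j k *v v)) = N (B j k *v v) / cmod (lam0 - a j) ^ k"
          using vn_basic(3)[OF NN] by (simp add: norm_divide norm_power)
        also have "\<dots> \<le> ?nrm (B j k) / cmod (lam0 - a j) ^ k"
          by (rule divide_right_mono) (simp_all add: induced_bound[OF NN Nv])
        also have "\<dots> \<le> ?nrm (B j k) / (x - cmod (a j)) ^ k"
          by (rule divide_left_mono) (use aj dist pp in \<open>simp_all add: induced_nonneg[OF NN] power_mono\<close>)
        finally show "N ((1 / (lam0 - a j) ^ k) *s (B j k *v v)) \<le> ?nrm (B j k) / (x - cmod (a j)) ^ k" .
      qed
      finally show "N (\<Sum>k=1..mm j. (1 / (lam0 - a j) ^ k) *s (B j k *v v))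
          \<le> (\<Sum>k=1..mm j. ?nrm (B j k) / (x - cmod (a j)) ^ k)" .
    qed
    finally show ?thesis .
  qed
  have main: "x ^ m \<le> SC x + SB x"
    using lhs NP NQ vn_basic(6)[OF NN, of P Q] unfolding eq by linarith
  have qR: "R ^ m = SC R + SB R" using assms(7) unfolding qfun_def SC_def SB_def by linarith
  obtain m' where mS: "m = Suc m'" using assms(1) by (cases m) auto
  have pm: "y ^ m = y ^ (m - 1) * y" for y :: real by (simp add: mS mult.commute)
  define s where "s = x / R"
  have s1: "1 \<le> s" using xR Rpos by (simp add: s_def)
  have xs: "x = s * R" using Rpos by (simp add: s_def)
  have SCb: "SC x \<le> s ^ (m - 1) * SC R" unfolding SC_def sum_distrib_left
  proof (rule sum_mono)
    fix i assume i: "i \<in> {..<m}"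
    have "s ^ i \<le> s ^ (m - 1)" using s1 i by (intro power_increasing) auto
    then have "s ^ i * R ^ i \<le> s ^ (m - 1) * R ^ i" using Rpos by (intro mult_right_mono) auto
    then have "x ^ i \<le> s ^ (m - 1) * R ^ i" by (simp add: xs power_mult_distrib)
    then have "?nrm (C i) * x ^ i \<le> ?nrm (C i) * (s ^ (m - 1) * R ^ i)"
      by (intro mult_left_mono) (simp_all add: induced_nonneg[OF NN])
    then show "?nrm (C i) * x ^ i \<le> s ^ (m - 1) * (?nrm (C i) * R ^ i)" by (simp add: algebra_simps)
  qed
  have SBb: "SB x \<le> SB R" unfolding SB_def
  proof (intro sum_mono)
    fix j k assume j: "j \<in> {1..n}"
    have aj: "cmod (a j) < R" using assms(8) j by fastforce
    show "?nrm (B j k) / (x - cmod (a j)) ^ k \<le> ?nrm (B j k) / (R - cmod (a j)) ^ k"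
      by (rule divide_left_mono) (use aj xR in \<open>simp_all add: induced_nonneg[OF NN] power_mono\<close>)
  qed
  have SBR: "0 \<le> SB R" unfolding SB_def
  proof (intro sum_nonneg)
    fix j k assume j: "j \<in> {1..n}"
    have aj: "cmod (a j) < R" using assms(8) j by fastforce
    show "0 \<le> ?nrm (B j k) / (R - cmod (a j)) ^ k" using aj by (simp add: induced_nonneg[OF NN])
  qed
  have "SB R \<le> s ^ (m - 1) * SB R" using SBR s1 by (simp add: one_le_power mult_le_cancel_right1)
  then have "x ^ m \<le> s ^ (m - 1) * R ^ m" using main SCb SBb qR by (simp add: algebra_simps)
  also have "\<dots> = x ^ (m - 1) * R"
    using pm[of R] by (simp add: xs power_mult_distrib mult.assoc)
  finally have "x ^ (m - 1) * x \<le> x ^ (m - 1) * R" using pm[of x] by simp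
  moreover have "0 < x ^ (m - 1)" using xR Rpos by simp
  ultimately show False using xR by simp
qed

end
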